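(* Let $R\subseteq\mathbb{R}^2$ be open and let $f:R\to\mathbb{R}^2$ be $C^1$. Let $R_0$ be a connected component of $R\setminus f^{-1}(f(S)\cup C(f))$, choose $z_0\in R_0$, let $w_0=f(z_0)$, and let $\Omega_0$ be the connected component of $\mathbb{R}^2\setminus(f(S)\cup C(f))$ containing $w_0$. Suppose that $w_0$ has exactly $n_0$ distinct preimages in $R_0$, where $0<n_0\le\mathrm{Val}(f,w_0)$. Then every $w\in\Omega_0$ has exactly $n_0$ distinct preimages in $R_0$.
   Context: Write $f=(u,v)$; $J_f=u_xv_y-u_yv_x$ and $S=\{z\in R: J_f(z)=0\}$. $C(f)$ is the set of finite points $\zeta\in\mathbb{R}^2$ for which there is a sequence $(z_n)\subset R$ converging to a point of $\partial R$ or with $|z_n|\to\infty$, such that $f(z_n)\to\zeta$. $\mathrm{Val}(f,w)$ is the number (possibly infinite) of distinct $z\in R$ with $f(z)=w$. *)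

theory Defs
  imports "HOL-Analysis.Analysis" "HOL-Library.Extended_Nat"
begin

definition C1_on :: "(real^2) set \<Rightarrow> (real^2 \<Rightarrow> real^2) \<Rightarrow> bool" where
  "C1_on R f \<longleftrightarrow> (\<forall>z\<in>R. f differentiable (at z)) \<and>
      continuous_on R (\<lambda>z. matrix (frechet_derivative f (at z)))"

definition jacobian_det :: "(real^2 \<Rightarrow> real^2) \<Rightarrow> real^2 \<Rightarrow> real" where
  "jacobian_det f z = det (matrix (frechet_derivative f (at z)))"

definition crit_set :: "(real^2) set \<Rightarrow> (real^2 \<Rightarrow> real^2) \<Rightarrow> (real^2) set" where
  "crit_set R f = {z\<in>R. jacobian_det f z = 0}"

definition cluster_set :: "(real^2) set \<Rightarrow> (real^2 \<Rightarrow> real^2) \<Rightarrow> (real^2) set" where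
  "cluster_set R f = {\<zeta>. \<exists>z::nat \<Rightarrow> real^2. (\<forall>n. z n \<in> R) \<and>
      ((\<exists>p\<in>frontier R. z \<longlonglongrightarrow> p) \<or> filterlim (\<lambda>n. norm (z n)) at_top sequentially) \<and>
      (\<lambda>n. f (z n)) \<longlonglongrightarrow> \<zeta>}"

definition Val :: "(real^2) set \<Rightarrow> (real^2 \<Rightarrow> real^2) \<Rightarrow> real^2 \<Rightarrow> enat" where
  "Val R f w = (if finite {z\<in>R. f z = w} then enat (card {z\<in>R. f z = w}) else \<infinity>)"

end

theory Submission
  imports Defs
begin


lemma LI:
  fixes f :: "real^2 \<Rightarrow> real^2"
  assumes "open R" "C1_on R f" "z \<in> R" "jacobian_det f z \<noteq> 0"
  obtains r where "r>0" "ball z r \<subseteq> R" "inj_on f (ball z r)"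
proof -
  define M where "M x = matrix (frechet_derivative f (at x))" for x
  have der: "(f has_derivative (\<lambda>v. M x *v v)) (at x)" if "x \<in> R" for x
    using assms(2) that jacobian_works[of f "at x"] unfolding C1_on_def M_def jacobian_def by auto
  have "invertible (M z)" using assms(4) invertible_det_nz unfolding jacobian_det_def M_def by auto
  then obtain B where B: "B ** M z = mat 1" using invertible_left_inverse by blast
  have cont: "isCont M z"
    using assms(1-3) unfolding C1_on_def M_def by (simp add: continuous_on_eq_continuous_at)
  show ?thesis
  proof (rule has_derivative_locally_injective[of z R "(*v) B" "\<lambda>x v. M x *v v" f])
    show "bounded_linear ((*v) B)" by (rule matrix_vector_mul_bounded_linear)
    show "(*v) B \<circ> (\<lambda>v. M z *v v) = id" using B by (auto simp: matrix_vector_mul_assoc)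
    fix e :: real assume "e > 0"
    then obtain d where d: "d > 0" "\<And>x. dist x z < d \<Longrightarrow> dist (M x) (M z) < e/4"
      using cont unfolding continuous_at_eps_delta by (metis divide_pos_pos zero_less_numeral)
    show "\<exists>d>0. \<forall>x. dist z x < d \<longrightarrow> onorm (\<lambda>v. M x *v v - M z *v v) < e"
    proof (intro exI[of _ d] conjI allI impI)
      fix x assume "dist z x < d"
      then have lt: "norm (M x - M z) < e/4" using d by (simp add: dist_commute dist_norm)
      have "(\<lambda>v. M x *v v - M z *v v) = (*v) (M x - M z)"
        by (rule ext) (simp add: matrix_vector_mult_diff_rdistrib)
      moreover have "onorm ((*v) (M x - M z)) \<le> real CARD(2) * real CARD(2) * norm (M x - M z)"
      proof (rule onorm_le_matrix_component)
        fix i j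
        have "\<bar>(M x - M z) $ i $ j\<bar> \<le> norm ((M x - M z) $ i)" by (rule component_le_norm_cart)
        also have "\<dots> \<le> norm (M x - M z)" by (rule Finite_Cartesian_Product.norm_nth_le)
        finally show "\<bar>(M x - M z) $ i $ j\<bar> \<le> norm (M x - M z)" .
      qed
      ultimately show "onorm (\<lambda>v. M x *v v - M z *v v) < e" using lt by simp
    qed (use d in auto)
  qed (use assms der that in auto)
qed



lemma proper_near:
  fixes f :: "real^2 \<Rightarrow> real^2"
  assumes R: "open R" and fc: "continuous_on R f" and w: "w \<notin> cluster_set R f"
  obtains e K where "e>0" "compact K" "K \<subseteq> R" "\<And>y. y \<in> R \<Longrightarrow> dist (f y) w < e \<Longrightarrow> y \<in> K"
proof -
  define K where "K n = cball 0 (real (Suc n)) \<inter> (\<Inter>q\<in>-R. - ball q (1 / real (Suc n)))" for n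
  have Kc: "compact (K n)" for n
    unfolding K_def by (intro compact_Int_closed compact_cball closed_INT ballI closed_Compl open_ball)
  have KR: "K n \<subseteq> R" for n
  proof
    fix y assume "y \<in> K n"
    show "y \<in> R"
    proof (rule ccontr)
      assume "y \<notin> R"
      then have "y \<in> - ball y (1 / real (Suc n))" using \<open>y \<in> K n\<close> unfolding K_def by blast
      then show False by simp
    qed
  qed
  show ?thesis
  proof (rule ccontr)
    assume "\<not> ?thesis"
    then have "\<forall>n. \<exists>y. y \<in> R \<and> dist (f y) w < 1 / real (Suc n) \<and> y \<notin> K n"
      using Kc KR that by (metis divide_pos_pos of_nat_0_less_iff zero_less_Suc zero_less_one)
    then obtain y where y: "\<And>n. y n \<in> R" "\<And>n. dist (f (y n)) w < 1 / real (Suc n)" "\<And>n. y n \<notin> K n"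
      by metis
    have fy: "(\<lambda>n. f (y n)) \<longlonglongrightarrow> w"
    proof (rule metric_LIMSEQ_I)
      fix r :: real assume "r > 0"
      then obtain N where N: "inverse (real (Suc N)) < r" using reals_Archimedean by blast
      show "\<exists>no. \<forall>n\<ge>no. dist (f (y n)) w < r"
      proof (intro exI allI impI)
        fix n assume "N \<le> n"
        then have "1 / real (Suc n) \<le> inverse (real (Suc N))"
          by (simp add: divide_simps)
        then show "dist (f (y n)) w < r" using y(2)[of n] N by linarith
      qed
    qed
    have nottop: "\<not> filterlim (\<lambda>n. norm (y n)) at_top sequentially"
      using w y(1) fy unfolding cluster_set_def by blast
    then obtain Z where "\<not> eventually (\<lambda>n. Z \<le> norm (y n)) sequentially"
      unfolding filterlim_at_top by blast
    then have "frequently (\<lambda>n. norm (y n) < Z) sequentially"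
      unfolding frequently_def by (simp add: not_less)
    then have "infinite {n. norm (y n) < Z}"
      by (simp add: frequently_cofinite[symmetric] cofinite_eq_sequentially)
    then obtain r :: "nat \<Rightarrow> nat" where r: "strict_mono r" "\<And>n. r n \<in> {n. norm (y n) < Z}"
      using infinite_enumerate by blast
    have "\<forall>n. (y \<circ> r) n \<in> cball 0 Z" using r(2) by (auto intro: less_imp_le)
    then obtain l s where ls: "l \<in> cball 0 Z" "strict_mono s" "((y \<circ> r) \<circ> s) \<longlonglongrightarrow> l"
      using compact_imp_seq_compact[OF compact_cball] unfolding seq_compact_def by metis
    define t where "t = r \<circ> s"
    have t: "strict_mono t" using r(1) ls(2) unfolding t_def by (simp add: strict_mono_o)
    have zl: "(y \<circ> t) \<longlonglongrightarrow> l" using ls(3) unfolding t_def by (simp add: o_assoc)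
    have fz: "(\<lambda>n. f ((y \<circ> t) n)) \<longlonglongrightarrow> w"
      using LIMSEQ_subseq_LIMSEQ[OF fy t] by (simp add: o_def)
    show False
    proof (cases "l \<in> R")
      case False
      have "l \<in> closure R" unfolding closure_sequential using zl y(1) by (intro exI[of _ "y \<circ> t"]) auto
      then have "l \<in> frontier R" using False R by (simp add: frontier_def interior_open)
      then have "w \<in> cluster_set R f"
        unfolding cluster_set_def using zl fz y(1) by (intro CollectI exI[of _ "y \<circ> t"]) auto
      then show False using w by blast
    next
      case True
      then obtain \<delta> where \<delta>: "\<delta> > 0" "ball l \<delta> \<subseteq> R" using R open_contains_ball by blast
      obtain N1 where N1: "norm l + \<delta> \<le> real N1" using real_arch_simple by blast
      obtain N2 where N2: "inverse (real (Suc N2)) < \<delta>/2" using reals_Archimedean[of "\<delta>/2"] \<delta>(1) by auto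
      obtain N3 where N3: "\<And>n. n \<ge> N3 \<Longrightarrow> dist ((y \<circ> t) n) l < \<delta>/2"
        using zl \<delta> unfolding LIMSEQ_def by (metis half_gt_zero)
      define n where "n = max N1 (max N2 N3)"
      have tn: "t n \<ge> n" using t by (simp add: seq_suble)
      have d: "dist (y (t n)) l < \<delta>/2" using N3[of n] by (simp add: n_def)
      have "y (t n) \<in> K (t n)"
        unfolding K_def
      proof (intro IntI INT_I)
        have "norm (y (t n)) \<le> norm l + dist (y (t n)) l"
          by (metis dist_norm norm_triangle_sub add.commute)
        also have "\<dots> \<le> real (Suc (t n))" using d N1 tn \<delta>(1) unfolding n_def by linarith
        finally show "y (t n) \<in> cball 0 (real (Suc (t n)))" by simp
      next
        fix q assume "q \<in> - R"
        then have "q \<notin> ball l \<delta>" using \<delta>(2) by blast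
        then have "\<delta> \<le> dist l q" by simp
        moreover have "dist l q \<le> dist l (y (t n)) + dist (y (t n)) q" by (rule dist_triangle)
        moreover have "1 / real (Suc (t n)) \<le> inverse (real (Suc N2))"
          using tn unfolding n_def by (simp add: divide_simps)
        ultimately have "1 / real (Suc (t n)) \<le> dist (y (t n)) q"
          using d N2 by (simp add: dist_commute)
        then show "y (t n) \<in> - ball q (1 / real (Suc (t n)))" by (simp add: dist_commute)
      qed
      then show False using y(3) by blast
    qed
  qed
qed



lemma jac_cont:
  assumes "C1_on R f"
  shows "continuous_on R (jacobian_det f)"
proof -
  have c: "continuous_on R (\<lambda>z. matrix (frechet_derivative f (at z)))"
    using assms unfolding C1_on_def by blast
  have "jacobian_det f = (\<lambda>z. matrix (frechet_derivative f (at z)) $1$1 * matrix (frechet_derivative f (at z)) $2$2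
      - matrix (frechet_derivative f (at z)) $1$2 * matrix (frechet_derivative f (at z)) $2$1)"
    unfolding jacobian_det_def by (rule ext) (rule det_2)
  then show ?thesis using c by (simp add: continuous_intros)
qed

lemma f_cont:
  assumes "C1_on R f" shows "continuous_on R f"
  using assms unfolding C1_on_def
  by (meson continuous_at_imp_continuous_on differentiable_imp_continuous_within)

lemma avoid_E:
  fixes f :: "real^2 \<Rightarrow> real^2"
  assumes R: "open R" and C1: "C1_on R f" and w: "w \<notin> f ` crit_set R f \<union> cluster_set R f"
  shows "\<exists>\<epsilon>>0. ball w \<epsilon> \<inter> (f ` crit_set R f \<union> cluster_set R f) = {}"
proof -
  have fc: "continuous_on R f" using C1 by (rule f_cont)
  obtain e K where eK: "e>0" "compact K" "K \<subseteq> R" "\<And>y. y \<in> R \<Longrightarrow> dist (f y) w < e \<Longrightarrow> y \<in> K"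
    using proper_near[OF R fc] w by blast
  have cl: "\<zeta> \<notin> cluster_set R f" if "\<zeta> \<in> ball w e" for \<zeta>
  proof
    assume "\<zeta> \<in> cluster_set R f"
    then obtain z where z: "\<And>n. z n \<in> R" "(\<exists>p\<in>frontier R. z \<longlonglongrightarrow> p) \<or> filterlim (\<lambda>n. norm (z n)) at_top sequentially"
       "(\<lambda>n. f (z n)) \<longlonglongrightarrow> \<zeta>" unfolding cluster_set_def by blast
    have "eventually (\<lambda>n. f (z n) \<in> ball w e) sequentially"
      using z(3) that by (rule topological_tendstoD[OF _ open_ball])
    then have evK: "eventually (\<lambda>n. z n \<in> K) sequentially"
      by eventually_elim (use eK(4) z(1) in \<open>auto simp: dist_commute\<close>)
    from z(2) show False
    proof
      assume "\<exists>p\<in>frontier R. z \<longlonglongrightarrow> p"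
      then obtain p where p: "p \<in> frontier R" "z \<longlonglongrightarrow> p" by blast
      have "p \<in> K" using Lim_in_closed_set[OF compact_imp_closed[OF eK(2)] evK _ p(2)] by simp
      then show False using p(1) eK(3) R by (auto simp: frontier_def interior_open)
    next
      assume top: "filterlim (\<lambda>n. norm (z n)) at_top sequentially"
      obtain B where B: "\<And>x. x \<in> K \<Longrightarrow> norm x \<le> B"
        using compact_imp_bounded[OF eK(2)] bounded_iff by blast
      have "eventually (\<lambda>n. B + 1 \<le> norm (z n)) sequentially"
        using top unfolding filterlim_at_top by blast
      with evK have "eventually (\<lambda>n. False) sequentially"
      proof eventually_elim
        case (elim n)
        then have "norm (z n) \<le> B" using B by blast
        then show False using elim by linarith
      qed
      then show False by simp
    qed
  qed
  define A where "A = {z \<in> K. jacobian_det f z = 0}"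
  have "closed A" unfolding A_def
    by (rule continuous_closed_preimage_constant)
       (use continuous_on_subset[OF jac_cont[OF C1] eK(3)] compact_imp_closed[OF eK(2)] in auto)
  moreover have "A = K \<inter> A" unfolding A_def by blast
  ultimately have "compact A" using compact_Int_closed[OF eK(2)] by metis
  moreover have "A \<subseteq> R" using eK(3) unfolding A_def by blast
  ultimately have "compact (f ` A)"
    using compact_continuous_image continuous_on_subset[OF fc] by metis
  moreover have "w \<notin> f ` A" using w eK(3) unfolding A_def crit_set_def by auto
  ultimately obtain \<delta> where \<delta>: "\<delta> > 0" "\<And>x. x \<in> f ` A \<Longrightarrow> \<delta> \<le> dist w x"
    using separate_point_closed[OF compact_imp_closed] by metis
  have "ball w (min e \<delta>) \<inter> (f ` crit_set R f \<union> cluster_set R f) = {}"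
  proof (safe)
    fix s assume s: "f s \<in> ball w (min e \<delta>)" "s \<in> crit_set R f"
    then have "s \<in> K" using eK(4) unfolding crit_set_def by (auto simp: dist_commute)
    then have "f s \<in> f ` A" using s(2) unfolding A_def crit_set_def by auto
    then show "f s \<in> {}" using \<delta>(2)[of "f s"] s(1) by auto
  next
    fix \<zeta> assume "\<zeta> \<in> ball w (min e \<delta>)" "\<zeta> \<in> cluster_set R f"
    then show "\<zeta> \<in> {}" using cl by auto
  qed
  then show ?thesis using eK(1) \<delta>(1) by (intro exI[of _ "min e \<delta>"]) auto
qed



theorem lemma3p11:
  fixes R R0 :: "(real^2) set" and f :: "real^2 \<Rightarrow> real^2" and z0 :: "real^2" and n0 :: nat
  assumes "open R"
    and "C1_on R f"
    and "R0 \<in> components (R - f -` (f ` crit_set R f \<union> cluster_set R f))"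
    and "z0 \<in> R0"
    and "finite {z\<in>R0. f z = f z0}"
    and "card {z\<in>R0. f z = f z0} = n0"
    and "0 < n0"
    and "enat n0 \<le> Val R f (f z0)"
  shows "\<forall>w\<in>connected_component_set (UNIV - (f ` crit_set R f \<union> cluster_set R f)) (f z0).
           finite {z\<in>R0. f z = w} \<and> card {z\<in>R0. f z = w} = n0"
proof -
  define E where "E = f ` crit_set R f \<union> cluster_set R f"
  define R' where "R' = R - f -` E"
  define F where "F w = {z\<in>R0. f z = w}" for w
  note R = assms(1) and C1 = assms(2)
  have R0c: "R0 \<in> components R'" using assms(3) unfolding R'_def E_def .
  have fc: "continuous_on R f" using C1 by (rule f_cont)
  have J: "jacobian_det f z \<noteq> 0" if "z \<in> R" "f z \<notin> E" for z
    using that unfolding E_def crit_set_def by auto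
  have R'open: "open R'"
    unfolding open_contains_ball
  proof
    fix z assume z: "z \<in> R'"
    then obtain \<epsilon> where \<epsilon>: "\<epsilon> > 0" "ball (f z) \<epsilon> \<inter> E = {}"
      using avoid_E[OF R C1] unfolding R'_def E_def by blast
    obtain r1 where r1: "r1 > 0" "ball z r1 \<subseteq> R" using z R unfolding R'_def open_contains_ball by blast
    have "isCont f z" using z R fc unfolding R'_def by (simp add: continuous_on_eq_continuous_at)
    then obtain r2 where r2: "r2 > 0" "\<And>x. dist x z < r2 \<Longrightarrow> dist (f x) (f z) < \<epsilon>"
      using \<epsilon>(1) unfolding continuous_at_eps_delta by blast
    have "ball z (min r1 r2) \<subseteq> R'"
    proof
      fix x assume x: "x \<in> ball z (min r1 r2)"
      then have "x \<in> R" using r1 by auto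
      moreover have "f x \<in> ball (f z) \<epsilon>" using r2(2)[of x] x by (simp add: dist_commute)
      ultimately show "x \<in> R'" using \<epsilon>(2) unfolding R'_def by blast
    qed
    then show "\<exists>e>0. ball z e \<subseteq> R'" using r1 r2 by (intro exI[of _ "min r1 r2"]) auto
  qed
  have R0open: "open R0" using open_components[OF R'open R0c] .
  have R0sub: "R0 \<subseteq> R'" using in_components_subset[OF R0c] .
  have R0clos: "p \<in> R0" if "p \<in> R'" "p \<in> closure R0" for p
  proof -
    have c: "connected (insert p R0)"
      by (rule connected_intermediate_closure[OF in_components_connected[OF R0c]])
         (use that closure_subset in auto)
    have s: "insert p R0 \<subseteq> R'" using that R0sub by blast
    have mx: "\<forall>D. D \<noteq> {} \<and> R0 \<subseteq> D \<and> D \<subseteq> R' \<and> connected D \<longrightarrow> D = R0"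
      using R0c in_components_maximal by blast
    have "insert p R0 = R0" by (rule mx[rule_format]) (use c s in auto)
    then show ?thesis by blast
  qed
  have fiber: "finite (F w) \<and> (\<exists>\<delta>>0. \<forall>w'\<in>ball w \<delta>. finite (F w') \<and> card (F w') = card (F w))"
    if w: "w \<notin> E" for w
  proof -
    have wc: "w \<notin> cluster_set R f" using w unfolding E_def by blast
    obtain e K where eK: "e>0" "compact K" "K \<subseteq> R" "\<And>y. y \<in> R \<Longrightarrow> dist (f y) w < e \<Longrightarrow> y \<in> K"
      using proper_near[OF R fc wc] by blast
    have JR: "jacobian_det f p \<noteq> 0" if "p \<in> R" "f p = w" for p using J that w by blast
    have FK: "F w \<subseteq> K"
    proof
      fix z assume "z \<in> F w"
      then have "z \<in> R" "f z = w" using R0sub unfolding F_def R'_def by auto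
      then show "z \<in> K" using eK(4)[of z] eK(1) by simp
    qed
    have finF: "finite (F w)"
    proof -
      have "finite (K \<inter> F w)"
      proof (rule finite_not_islimpt_in_compact[OF eK(2)])
        fix p assume pK: "p \<in> K"
        show "\<not> p islimpt F w"
        proof
          assume lp: "p islimpt F w"
          have pR: "p \<in> R" using pK eK(3) by blast
          have fp: "f p = w"
          proof (rule ccontr)
            assume ne: "f p \<noteq> w"
            have "isCont f p" using pR R fc by (simp add: continuous_on_eq_continuous_at)
            moreover have "dist w (f p) > 0" using ne by simp
            ultimately obtain d where d: "d>0" "\<And>x. dist x p < d \<Longrightarrow> dist (f x) (f p) < dist w (f p)"
              unfolding continuous_at_eps_delta by blast
            obtain x where "x \<in> F w" "x \<noteq> p" "dist x p < d"
              using lp d(1) unfolding islimpt_approachable by blast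
            then show False using d(2)[of x] unfolding F_def by auto
          qed
          obtain r where r: "r>0" "ball p r \<subseteq> R" "inj_on f (ball p r)"
            using LI[OF R C1 pR JR[OF pR fp]] by blast
          obtain x where x: "x \<in> F w" "x \<noteq> p" "dist x p < r"
            using lp r(1) unfolding islimpt_approachable by blast
          have "x \<in> ball p r" "p \<in> ball p r" using x(3) r(1) by (auto simp: dist_commute)
          moreover have "f x = f p" using x(1) fp unfolding F_def by simp
          ultimately have "x = p" using r(3) unfolding inj_on_def by blast
          then show False using x(2) by blast
        qed
      qed
      then show ?thesis using FK by (simp add: Int_absorb1)
    qed
    have "\<forall>z\<in>F w. \<exists>r>0. ball z r \<subseteq> R0 \<and> inj_on f (ball z r) \<and> (\<forall>z'\<in>F w. z' \<noteq> z \<longrightarrow> 2*r \<le> dist z z')"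
    proof
      fix z assume z: "z \<in> F w"
      then have zR: "z \<in> R" "z \<in> R0" "f z = w" using R0sub unfolding F_def R'_def by auto
      obtain r1 where r1: "r1>0" "ball z r1 \<subseteq> R" "inj_on f (ball z r1)"
        using LI[OF R C1 zR(1) JR[OF zR(1) zR(3)]] by blast
      obtain r2 where r2: "r2>0" "ball z r2 \<subseteq> R0" using R0open zR(2) open_contains_ball by blast
      obtain d where d: "d>0" "\<forall>x\<in>F w. x \<noteq> z \<longrightarrow> d \<le> dist z x" using finite_set_avoid[OF finF] by blast
      show "\<exists>r>0. ball z r \<subseteq> R0 \<and> inj_on f (ball z r) \<and> (\<forall>z'\<in>F w. z' \<noteq> z \<longrightarrow> 2*r \<le> dist z z')"
      proof (intro exI[of _ "min r1 (min r2 (d/2))"] conjI ballI impI)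
        show "min r1 (min r2 (d/2)) > 0" using r1 r2 d by simp
        show "ball z (min r1 (min r2 (d/2))) \<subseteq> R0" using r2 by auto
        show "inj_on f (ball z (min r1 (min r2 (d/2))))" using r1(3) by (rule inj_on_subset) auto
        fix z' assume "z' \<in> F w" "z' \<noteq> z"
        then have "d \<le> dist z z'" using d by blast
        then show "2 * min r1 (min r2 (d/2)) \<le> dist z z'" by linarith
      qed
    qed
    from bchoice[OF this] obtain rad where radall: "\<forall>z\<in>F w. rad z > 0 \<and> ball z (rad z) \<subseteq> R0 \<and> inj_on f (ball z (rad z)) \<and> (\<forall>z'\<in>F w. z' \<noteq> z \<longrightarrow> 2*rad z \<le> dist z z')"
      by blast
    have rad: "\<And>z. z \<in> F w \<Longrightarrow> rad z > 0" "\<And>z. z \<in> F w \<Longrightarrow> ball z (rad z) \<subseteq> R0"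
      "\<And>z. z \<in> F w \<Longrightarrow> inj_on f (ball z (rad z))"
      "\<And>z z'. z \<in> F w \<Longrightarrow> z' \<in> F w \<Longrightarrow> z' \<noteq> z \<Longrightarrow> 2*rad z \<le> dist z z'"
      using radall by blast+
    define B where "B z = ball z (rad z)" for z
    have disj: "B z \<inter> B z' = {}" if zz: "z \<in> F w" "z' \<in> F w" "z \<noteq> z'" for z z'
    proof (rule ccontr)
      assume "B z \<inter> B z' \<noteq> {}"
      then obtain x where x: "dist z x < rad z" "dist z' x < rad z'" unfolding B_def by auto
      have "2*rad z \<le> dist z z'" "2*rad z' \<le> dist z' z" using rad(4) zz by auto
      moreover have "dist z z' \<le> dist z x + dist z' x" by (rule dist_triangle2)
      ultimately show False using x dist_commute[of z' z] by linarith
    qed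
    have BR0: "B z \<subseteq> R0" if "z \<in> F w" for z using rad(2) that unfolding B_def by blast
    have Bopen: "open (f ` B z)" if "z \<in> F w" for z
    proof (rule invariance_of_domain)
      show "continuous_on (B z) f"
        by (rule continuous_on_subset[OF fc]) (use BR0[OF that] R0sub R'_def in blast)
      show "open (B z)" unfolding B_def by simp
      show "inj_on f (B z)" using rad(3)[OF that] unfolding B_def .
    qed
    have wU: "w \<in> f ` B z" if "z \<in> F w" for z
    proof -
      have "z \<in> B z" using rad(1)[OF that] unfolding B_def by simp
      moreover have "f z = w" using that unfolding F_def by simp
      ultimately show ?thesis by (metis image_eqI)
    qed
    have "open (\<Inter>z\<in>F w. f ` B z)" using finF Bopen by (intro open_INT) auto
    moreover have "w \<in> (\<Inter>z\<in>F w. f ` B z)" using wU by blast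
    ultimately obtain \<delta>1 where \<delta>1: "\<delta>1 > 0" "ball w \<delta>1 \<subseteq> (\<Inter>z\<in>F w. f ` B z)"
      using open_contains_ball by blast
    define A where "A = K \<inter> (closure R0 \<inter> - (\<Union>z\<in>F w. B z))"
    have "closed (closure R0 \<inter> - (\<Union>z\<in>F w. B z))"
      by (intro closed_Int closed_closure closed_Compl open_UN ballI) (simp add: B_def)
    then have "compact A" unfolding A_def by (rule compact_Int_closed[OF eK(2)])
    moreover have "A \<subseteq> R" using eK(3) unfolding A_def by blast
    ultimately have "compact (f ` A)"
      using compact_continuous_image continuous_on_subset[OF fc] by metis
    moreover have "w \<notin> f ` A"
    proof
      assume "w \<in> f ` A"
      then obtain y where y: "y \<in> A" "f y = w" by blast
      then have "y \<in> R" using eK(3) unfolding A_def by blast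
      then have "y \<in> R'" using y(2) w unfolding R'_def by blast
      moreover have "y \<in> closure R0" using y(1) unfolding A_def by blast
      ultimately have "y \<in> R0" using R0clos by blast
      then have yF: "y \<in> F w" using y(2) unfolding F_def by blast
      then have "y \<in> B y" using rad(1)[OF yF] unfolding B_def by simp
      then show False using y(1) yF unfolding A_def by blast
    qed
    ultimately obtain \<delta>2 where \<delta>2: "\<delta>2 > 0" "\<And>x. x \<in> f ` A \<Longrightarrow> \<delta>2 \<le> dist w x"
      using separate_point_closed[OF compact_imp_closed] by metis
    have main: "finite (F w') \<and> card (F w') = card (F w)" if w': "w' \<in> ball w (min e (min \<delta>1 \<delta>2))" for w'
    proof -
      have cover: "F w' \<subseteq> (\<Union>z\<in>F w. B z)"
      proof
        fix y assume yF: "y \<in> F w'"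
        then have yR0: "y \<in> R0" and fy: "f y = w'" unfolding F_def by auto
        then have "y \<in> R" using R0sub unfolding R'_def by blast
        then have "y \<in> K" using eK(4)[of y] fy w' by (simp add: dist_commute)
        show "y \<in> (\<Union>z\<in>F w. B z)"
        proof (rule ccontr)
          assume "y \<notin> (\<Union>z\<in>F w. B z)"
          then have "y \<in> A" unfolding A_def using \<open>y \<in> K\<close> yR0 closure_subset by blast
          then have "\<delta>2 \<le> dist w w'" using \<delta>2(2)[of "f y"] fy by (metis image_eqI)
          then show False using w' by simp
        qed
      qed
      define G where "G z = F w' \<inter> B z" for z
      have Gs: "\<exists>x. G z = {x}" if z: "z \<in> F w" for z
      proof -
        have "w' \<in> f ` B z" using \<delta>1(2) w' z by auto
        then obtain x where x: "x \<in> B z" "f x = w'" by blast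
        have "G z = {x}"
        proof
          show "{x} \<subseteq> G z" using x BR0[OF z] unfolding G_def F_def by blast
          show "G z \<subseteq> {x}"
          proof
            fix y assume "y \<in> G z"
            then have "y \<in> B z" "f y = f x" using x unfolding G_def F_def by auto
            then show "y \<in> {x}" using rad(3)[OF z] x(1) unfolding B_def inj_on_def by blast
          qed
        qed
        then show ?thesis by blast
      qed
      have FG: "F w' = (\<Union>z\<in>F w. G z)" using cover unfolding G_def by blast
      have finG: "\<forall>z\<in>F w. finite (G z)" using Gs by fastforce
      have "finite (F w')" unfolding FG using finF finG by blast
      moreover have "card (F w') = (\<Sum>z\<in>F w. card (G z))"
        unfolding FG
      proof (rule card_UN_disjoint[OF finF finG])
        show "\<forall>i\<in>F w. \<forall>j\<in>F w. i \<noteq> j \<longrightarrow> G i \<inter> G j = {}"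
          using disj unfolding G_def by blast
      qed
      moreover have "(\<Sum>z\<in>F w. card (G z)) = (\<Sum>z\<in>F w. 1)"
      proof (rule sum.cong)
        fix z assume "z \<in> F w"
        then obtain x where "G z = {x}" using Gs by blast
        then show "card (G z) = 1" by simp
      qed simp
      ultimately show ?thesis by simp
    qed
    have "min e (min \<delta>1 \<delta>2) > 0" using eK(1) \<delta>1(1) \<delta>2(1) by simp
    then show ?thesis using finF main by blast
  qed
  define \<Omega>0 where "\<Omega>0 = connected_component_set (UNIV - E) (f z0)"
  have z0E: "f z0 \<notin> E" using assms(4) R0sub unfolding R'_def by auto
  have \<Omega>E: "\<Omega>0 \<subseteq> UNIV - E" unfolding \<Omega>0_def by (rule connected_component_subset)
  have \<Omega>c: "connected \<Omega>0" unfolding \<Omega>0_def by (rule connected_connected_component)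
  have z0\<Omega>: "f z0 \<in> \<Omega>0" unfolding \<Omega>0_def using z0E by simp
  show ?thesis
    unfolding E_def[symmetric] \<Omega>0_def[symmetric]
  proof
    fix w assume w: "w \<in> \<Omega>0"
    have "card (F (f z0)) = card (F w)"
    proof (rule connected_local_const[OF \<Omega>c z0\<Omega> w], intro ballI)
      fix a assume "a \<in> \<Omega>0"
      then obtain \<delta> where \<delta>: "\<delta> > 0" "\<forall>w'\<in>ball a \<delta>. card (F w') = card (F a)"
        using fiber[of a] \<Omega>E by blast
      show "eventually (\<lambda>b. card (F a) = card (F b)) (at a within \<Omega>0)"
        unfolding eventually_at
      proof (intro exI[of _ \<delta>] conjI ballI impI)
        fix x assume "x \<in> \<Omega>0" "x \<noteq> a \<and> dist x a < \<delta>"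
        then have "x \<in> ball a \<delta>" by (simp add: dist_commute)
        then show "card (F a) = card (F x)" using \<delta>(2) by metis
      qed (use \<delta> in simp)
    qed
    then show "finite {z \<in> R0. f z = w} \<and> card {z \<in> R0. f z = w} = n0"
    proof -
      have "w \<notin> E" using w \<Omega>E by blast
      then have "finite (F w)" using fiber by blast
      moreover have "card (F (f z0)) = n0" using assms(6) unfolding F_def .
      ultimately show ?thesis using \<open>card (F (f z0)) = card (F w)\<close> unfolding F_def by simp
    qed
  qed
qed

end
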